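(* Let $q \ge 2$ and $n > 1$ be integers, let $\Sigma = \{0,1,\dots,q-1\}$, and let $m = 2^n - 1$. Then the truth table $T_n(L_q^m)$ is a binary (i.e. $2$-ary) $Z_{n+1}$ instance.
   Context: Zimin words are defined recursively over an alphabet of variables $x_1, x_2, \dots$ by $Z_1 = x_1$ and $Z_{k+1} = Z_k\, x_{k+1}\, Z_k$; thus $Z_k$ has length $2^k-1$ (e.g. $Z_2 = x_1x_2x_1$, $Z_3 = x_1x_2x_1x_3x_1x_2x_1$). A word $W$ over an alphabet $A$ is an instance of a word $V$ (a "$V$ instance") if there is a non-erasing monoid homomorphism $\phi$ from words over the letters of $V$ to $A^+$ (every letter is sent to a nonempty word over $A$) with $\phi(V) = W$. $L_q^m$ denotes the sequence of all $q^m$ words of length $m$ over $\Sigma$ listed in lexicographic order (with $0<1<\dots<q-1$; equivalently, ordered by their value as base-$q$ numerals). The truth table $T_n(L_q^m) = t_1 t_2 \cdots t_{q^m}$ is the word of length $q^m$ over $\{0,1\}$ such that $t_i = 1$ if and only if the $i$-th word of $L_q^m$ is a $Z_n$ instance. For example, for $q=2$, $n=2$, $m=3$ one has $T_2(L_2^3) = 10100101$. *)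

theory Defs
  imports Main "HOL-Library.List_Lexorder"
begin

fun zimin :: "nat \<Rightarrow> nat list" where
  "zimin 0 = []"
| "zimin (Suc 0) = [1]"
| "zimin (Suc (Suc k)) = zimin (Suc k) @ [Suc (Suc k)] @ zimin (Suc k)"

definition is_instance :: "'a list \<Rightarrow> 'b list \<Rightarrow> bool" where
  "is_instance V W \<longleftrightarrow>
     (\<exists>\<phi> :: 'a \<Rightarrow> 'b list. (\<forall>x \<in> set V. \<phi> x \<noteq> []) \<and> concat (map \<phi> V) = W)"

definition lex_words :: "nat \<Rightarrow> nat \<Rightarrow> nat list list" where
  "lex_words q m = sorted_list_of_set {w :: nat list. length w = m \<and> set w \<subseteq> {0..<q}}"

definition truth_table :: "nat \<Rightarrow> nat \<Rightarrow> nat \<Rightarrow> nat list" where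
  "truth_table n q m = map (\<lambda>w. if is_instance (zimin n) w then 1 else 0) (lex_words q m)"

end

theory Submission
  imports Defs
begin


fun nval :: "nat \<Rightarrow> nat list \<Rightarrow> nat" where
  "nval q [] = 0"
| "nval q (x # xs) = x * q ^ length xs + nval q xs"

lemma nval_append: "nval q (u @ v) = nval q u * q ^ length v + nval q v"
  by (induction u) (auto simp: algebra_simps power_add)

lemma nval_bound: "set w \<subseteq> {..<q} \<Longrightarrow> nval q w < q ^ length w"
proof (induction w)
  case Nil then show ?case by simp
next
  case (Cons x xs)
  then have x: "x < q" and ih: "nval q xs < q ^ length xs" by auto
  have "nval q (x # xs) < x * q ^ length xs + q ^ length xs" using ih by simp
  also have "\<dots> = (x + 1) * q ^ length xs" by simp
  also have "\<dots> \<le> q * q ^ length xs" using x by (intro mult_le_mono1) simp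
  finally show ?case by simp
qed

lemma nval_mono:
  "length u = length v \<Longrightarrow> set u \<subseteq> {..<q} \<Longrightarrow> set v \<subseteq> {..<q}
   \<Longrightarrow> (u, v) \<in> lexord {(a, b). a < b} \<Longrightarrow> nval q u < nval q v"
proof (induction u arbitrary: v)
  case Nil then show ?case by simp
next
  case (Cons a x v)
  then obtain b y where v: "v = b # y" by (cases v) auto
  show ?case
  proof (cases "a < b")
    case True
    have "nval q (a # x) < a * q ^ length x + q ^ length x"
      using nval_bound[of x q] Cons.prems by auto
    also have "\<dots> = (a + 1) * q ^ length x" by simp
    also have "\<dots> \<le> b * q ^ length x" using True by (intro mult_le_mono1) simp
    also have "\<dots> \<le> nval q v" using v Cons.prems by simp
    finally show ?thesis .
  next
    case False
    then have "a = b" "(x, y) \<in> lexord {(a, b). a < b}" using Cons.prems v by auto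
    then show ?thesis using Cons v by auto
  qed
qed

lemma nval_lin: "nval q (map (\<lambda>k. f k + g k) w) = nval q (map f w) + nval q (map g w)"
  by (induction w) (auto simp: algebra_simps)

lemma nval_minus:
  assumes "\<forall>k\<in>set w. g k \<le> f k"
  shows "nval q (map (\<lambda>k. f k - g k) w) + nval q (map g w) = nval q (map f w)"
proof -
  have "map f w = map (\<lambda>k. (f k - g k) + g k) w" using assms by auto
  then have "nval q (map f w) = nval q (map (\<lambda>k. (f k - g k) + g k) w)" by (rule arg_cong)
  then show ?thesis using nval_lin[of q "\<lambda>k. f k - g k" g w] by simp
qed

lemma nval_replicate: "q \<ge> 1 \<Longrightarrow> nval q (replicate L (q - 1)) = q ^ L - 1"
proof (induction L)
  case 0 then show ?case by simp
next
  case (Suc L)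
  have p: "q ^ L \<ge> 1" using Suc.prems by simp
  have "nval q (replicate (Suc L) (q - 1)) = (q - 1) * q ^ L + (q ^ L - 1)" using Suc by simp
  also have "\<dots> = q * q ^ L - 1" using p Suc.prems by (simp add: algebra_simps diff_mult_distrib)
  finally show ?case by simp
qed

lemma nval_zero: "\<forall>x\<in>set w. x = 0 \<Longrightarrow> nval q w = 0"
  by (induction w) auto

lemma nval_pos: "x \<in> set w \<Longrightarrow> x \<ge> 1 \<Longrightarrow> q \<ge> 1 \<Longrightarrow> nval q w \<ge> 1"
proof (induction w)
  case Nil then show ?case by simp
next
  case (Cons y ys)
  show ?case
  proof (cases "x = y")
    case True
    have q1: "q ^ length ys \<ge> 1" using Cons.prems by simp
    have "y * q ^ length ys \<ge> 1 * 1" using Cons.prems True q1 by (intro mult_le_mono) auto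
    moreover have "nval q (y # ys) \<ge> y * q ^ length ys" by simp
    ultimately show ?thesis by linarith
  next
    case False then show ?thesis using Cons by auto
  qed
qed

lemma WQ:
  assumes "length s1 = length s2" "set s1 \<subseteq> {..<q}" "a < b"
  shows "nval q (p @ a # s1) + 1 + nval q s2 \<le> nval q (p @ b # s2)"
proof -
  have "nval q s1 < q ^ length s1" using nval_bound assms(2) by blast
  then have "a * q ^ length s1 + nval q s1 + 1 \<le> (a + 1) * q ^ length s1" by simp
  also have "\<dots> \<le> b * q ^ length s1" using assms(3) by (intro mult_le_mono1) simp
  finally show ?thesis using assms(1) by (simp add: nval_append)
qed

lemma zimin_Suc: "zimin (Suc k) = zimin k @ [Suc k] @ zimin k"
  by (cases k) auto

lemma zimin_length: "length (zimin k) = 2 ^ k - 1"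
proof (induction k)
  case 0 then show ?case by simp
next
  case (Suc k)
  have "(2::nat) ^ k \<ge> 1" by simp
  then show ?case using Suc by (simp add: zimin_Suc)
qed

lemma zimin_set: "set (zimin k) = {1..k}"
  by (induction k) (auto simp: zimin_Suc)

lemma zimin_prefix: "k \<le> n \<Longrightarrow> \<exists>rest. zimin n = zimin k @ rest"
proof (induction n)
  case 0 then show ?case by simp
next
  case (Suc n)
  show ?case
  proof (cases "k = Suc n")
    case True then show ?thesis by simp
  next
    case False
    then obtain rest where "zimin n = zimin k @ rest" using Suc by auto
    then show ?thesis by (simp add: zimin_Suc)
  qed
qed

lemma zimin_prefix2: "1 \<le> k \<Longrightarrow> k \<le> n \<Longrightarrow> \<exists>rest. zimin n = zimin (k - 1) @ k # rest"
proof -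
  assume "1 \<le> k" "k \<le> n"
  then obtain rest where r: "zimin n = zimin k @ rest" using zimin_prefix by blast
  have "zimin k = zimin (k - 1) @ [k] @ zimin (k - 1)"
    using zimin_Suc[of "k - 1"] \<open>1 \<le> k\<close> by simp
  then show ?thesis using r by auto
qed

lemma concat_len_ge: "\<forall>x\<in>set V. \<phi> x \<noteq> [] \<Longrightarrow> length (concat (map \<phi> V)) \<ge> length V"
proof (induction V)
  case Nil then show ?case by simp
next
  case (Cons a V)
  then have "length (\<phi> a) \<ge> 1" by (simp add: Suc_leI)
  then show ?case using Cons by simp
qed

lemma concat_len_eq: "\<forall>x\<in>set V. \<phi> x \<noteq> [] \<Longrightarrow> length (concat (map \<phi> V)) = length V
   \<Longrightarrow> concat (map \<phi> V) = map (\<lambda>x. hd (\<phi> x)) V"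
proof (induction V)
  case Nil then show ?case by simp
next
  case (Cons a V)
  have g: "length (concat (map \<phi> V)) \<ge> length V" using concat_len_ge Cons.prems(1) by auto
  have "length (\<phi> a) \<ge> 1" using Cons.prems(1) by (simp add: Suc_leI)
  then have "length (\<phi> a) = 1" "length (concat (map \<phi> V)) = length V" using g Cons.prems(2) by auto
  then have "\<phi> a = [hd (\<phi> a)]" by (cases "\<phi> a") auto
  then show ?case using Cons \<open>length (concat (map \<phi> V)) = length V\<close> by simp
qed

lemma inst_iff: "length w = length V \<Longrightarrow> is_instance V w \<longleftrightarrow> (\<exists>f. w = map f V)"
proof
  assume "length w = length V" "is_instance V w"
  then obtain \<phi> where p: "\<forall>x\<in>set V. \<phi> x \<noteq> []" "concat (map \<phi> V) = w"
    unfolding is_instance_def by blast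
  then show "\<exists>f. w = map f V" using concat_len_eq[OF p(1)] \<open>length w = length V\<close> by metis
next
  assume "\<exists>f. w = map f V"
  then obtain f where "w = map f V" by blast
  then show "is_instance V w" unfolding is_instance_def
    by (rule_tac x="\<lambda>x. [f x]" in exI) (simp add: concat_map_singleton)
qed

lemma inst_step:
  assumes "is_instance (zimin k) A" "y \<noteq> []"
  shows "is_instance (zimin (Suc k)) (A @ y @ A)"
proof -
  obtain \<phi> where p: "\<forall>x\<in>set (zimin k). \<phi> x \<noteq> []" "concat (map \<phi> (zimin k)) = A"
    using assms(1) unfolding is_instance_def by blast
  define \<psi> where "\<psi> = \<phi>(Suc k := y)"
  have "Suc k \<notin> set (zimin k)" by (simp add: zimin_set)
  then have m: "map \<psi> (zimin k) = map \<phi> (zimin k)" unfolding \<psi>_def by (intro map_cong) auto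
  show ?thesis unfolding is_instance_def
    apply (rule exI[of _ \<psi>])
    using p m assms(2) by (auto simp: zimin_Suc \<psi>_def zimin_set)
qed

lemma border:
  assumes "a + 2 \<le> d" "a + d < length W" "\<forall>i\<le>a. W ! i = W ! (i + d)"
  shows "take (Suc (a + d)) W = take (Suc a) W @ drop (Suc a) (take d W) @ take (Suc a) W"
proof -
  have "take (Suc (a + d)) W = take d W @ take (Suc a) (drop d W)"
    by (metis add.commute add_Suc_right take_add)
  moreover have "take d W = take (Suc a) W @ drop (Suc a) (take d W)"
  proof -
    have "take (Suc a) (take d W) = take (Suc a) W" using assms(1) by (simp add: min_def)
    then show ?thesis by (metis append_take_drop_id)
  qed
  moreover have "take (Suc a) (drop d W) = take (Suc a) W"
    using assms(2,3) by (intro nth_equalityI) (auto simp: add.commute)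
  ultimately show ?thesis by simp
qed



definition SW :: "nat \<Rightarrow> nat \<Rightarrow> nat list set" where
  "SW q m = {w. length w = m \<and> set w \<subseteq> {0..<q}}"

lemma SW_finite: "finite (SW q m)"
  using finite_lists_length_eq[of "{0..<q}" m] unfolding SW_def by (simp add: conj_commute)

lemma SW_card: "card (SW q m) = q ^ m"
  using card_lists_length_eq[of "{0..<q}" m] unfolding SW_def by (simp add: conj_commute)

lemma SW_less: "x \<in> SW q m \<Longrightarrow> y \<in> SW q m \<Longrightarrow> x < y \<Longrightarrow> nval q x < nval q y"
  unfolding SW_def list_less_def by (intro nval_mono) auto

lemma SW_inj: "inj_on (nval q) (SW q m)"
proof (rule inj_onI)
  fix x y assume xy: "x \<in> SW q m" "y \<in> SW q m" "nval q x = nval q y"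
  show "x = y"
  proof (rule ccontr)
    assume "x \<noteq> y"
    then have "x < y \<or> y < x" by (meson neqE)
    then show False using SW_less xy by (metis less_irrefl)
  qed
qed

lemma SW_image: "nval q ` SW q m = {0..<q ^ m}"
proof -
  have sub: "nval q ` SW q m \<subseteq> {0..<q ^ m}"
  proof
    fix x assume "x \<in> nval q ` SW q m"
    then obtain w where "w \<in> SW q m" "x = nval q w" by blast
    then show "x \<in> {0..<q ^ m}" using nval_bound[of w q] unfolding SW_def by (auto simp: atLeast0LessThan)
  qed
  have "card (nval q ` SW q m) = q ^ m" using SW_inj SW_card by (simp add: card_image)
  then show ?thesis using sub by (intro card_subset_eq) auto
qed

lemma lex_words_SW: "lex_words q m = sorted_list_of_set (SW q m)"
  unfolding lex_words_def SW_def by simp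

lemma map_lex_words: "map (nval q) (lex_words q m) = [0..<q ^ m]"
proof -
  let ?L = "lex_words q m"
  have st: "sorted_wrt (<) ?L" unfolding lex_words_SW using strict_sorted_list_of_set by blast
  have sL: "set ?L = SW q m" unfolding lex_words_SW using SW_finite by simp
  have "sorted_wrt (<) (map (nval q) ?L)"
    unfolding sorted_wrt_map
    by (rule sorted_wrt_mono_rel[OF _ st]) (use SW_less sL in auto)
  then have "sorted (map (nval q) ?L)" "distinct (map (nval q) ?L)"
    by (auto simp: strict_sorted_iff)
  moreover have "set (map (nval q) ?L) = set [0..<q ^ m]" using sL SW_image by simp
  ultimately show ?thesis by (intro sorted_distinct_set_unique) auto
qed

lemma lex_words_len: "length (lex_words q m) = q ^ m"
  using arg_cong[OF map_lex_words, of length] by simp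

lemma lex_words_nth:
  assumes "i < q ^ m"
  shows "lex_words q m ! i \<in> SW q m" "nval q (lex_words q m ! i) = i"
proof -
  show "lex_words q m ! i \<in> SW q m"
    using assms lex_words_len SW_finite unfolding lex_words_SW
    by (metis nth_mem set_sorted_list_of_set)
  show "nval q (lex_words q m ! i) = i"
    using arg_cong[OF map_lex_words[of q m], of "\<lambda>l. l ! i"] assms lex_words_len[of q m] by simp
qed



locale zs =
  fixes q n :: nat
  assumes q2: "q \<ge> 2" and n1: "n > 1"
begin

definition mm :: nat where "mm = 2 ^ n - 1"
definition Good :: "nat \<Rightarrow> bool" where
  "Good i \<longleftrightarrow> (\<exists>f. (\<forall>k. f k < q) \<and> nval q (map f (zimin n)) = i)"
definition TT :: "nat list" where "TT = truth_table n q mm"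

lemma TT_len: "length TT = q ^ mm"
  unfolding TT_def truth_table_def by (simp add: lex_words_len)

lemma TT_nth:
  assumes "i < q ^ mm"
  shows "TT ! i = (if Good i then 1 else 0)"
proof -
  let ?w = "lex_words q mm ! i"
  have wS: "?w \<in> SW q mm" and wv: "nval q ?w = i" using lex_words_nth assms by auto
  have len: "length ?w = length (zimin n)" using wS unfolding SW_def mm_def by (simp add: zimin_length)
  have "is_instance (zimin n) ?w \<longleftrightarrow> Good i"
  proof
    assume "is_instance (zimin n) ?w"
    then obtain f where f: "?w = map f (zimin n)" using inst_iff[OF len] by blast
    define f' where "f' k = (if k \<in> set (zimin n) then f k else 0)" for k
    have "map f' (zimin n) = map f (zimin n)" unfolding f'_def by (intro map_cong) auto
    moreover have "\<forall>k. f' k < q"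
    proof
      fix k show "f' k < q"
      proof (cases "k \<in> set (zimin n)")
        case True
        then have "f k \<in> set ?w" using f by simp
        then show ?thesis using wS True unfolding SW_def f'_def by auto
      next
        case False then show ?thesis unfolding f'_def using q2 by simp
      qed
    qed
    ultimately show "Good i" unfolding Good_def using f wv by metis
  next
    assume "Good i"
    then obtain f where f: "\<forall>k. f k < q" "nval q (map f (zimin n)) = i" unfolding Good_def by blast
    have "map f (zimin n) \<in> SW q mm" using f(1) unfolding SW_def mm_def by (auto simp: zimin_length)
    then have "map f (zimin n) = ?w" using SW_inj[of q mm] wS f(2) wv by (metis inj_on_def)
    then show "is_instance (zimin n) ?w" using inst_iff[OF len] by metis
  qed
  then show ?thesis unfolding TT_def truth_table_def using assms lex_words_len by simp
qed

lemma LEX: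
  assumes "\<forall>k. f k < q" "\<forall>k. g k < q" "1 \<le> k" "k \<le> n"
    "\<forall>j. 1 \<le> j \<longrightarrow> j < k \<longrightarrow> f j = g j" "f k < g k"
  shows "nval q (map f (zimin n)) < nval q (map g (zimin n))"
proof -
  obtain rest where r: "zimin n = zimin (k - 1) @ k # rest" using zimin_prefix2 assms(3,4) by blast
  have p: "map f (zimin (k - 1)) = map g (zimin (k - 1))"
    using assms(5) by (intro map_cong) (auto simp: zimin_set)
  have "(map f (zimin n), map g (zimin n)) \<in> lexord {(a, b). a < b}"
    unfolding r map_append list.map p
    by (rule lexord_append_left_rightI) (simp add: assms(6))
  then show ?thesis using assms(1,2) by (intro nval_mono) auto
qed

lemma LEXle:
  assumes "\<forall>k. f k < q" "\<forall>k. g k < q" "1 \<le> k" "k \<le> n"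
    "\<forall>j. 1 \<le> j \<longrightarrow> j < k \<longrightarrow> f j = g j"
    "nval q (map f (zimin n)) \<le> nval q (map g (zimin n))"
  shows "f k \<le> g k"
proof (rule ccontr)
  assume "\<not> f k \<le> g k"
  then have "nval q (map g (zimin n)) < nval q (map f (zimin n))"
    using assms by (intro LEX) auto
  then show False using assms(6) by simp
qed

lemma zeros:
  assumes "\<forall>k. f k < q" "\<forall>k. g k < q" "r \<le> n"
    "\<forall>j. 1 \<le> j \<longrightarrow> j \<le> r \<longrightarrow> g j = 0"
    "nval q (map f (zimin n)) \<le> nval q (map g (zimin n))"
  shows "1 \<le> j \<Longrightarrow> j \<le> r \<Longrightarrow> f j = 0"
proof (induction j rule: less_induct)
  case (less j)
  have "f j \<le> g j"
    using assms less by (intro LEXle[of f g j]) auto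
  then show ?case using assms(4) less.prems by auto
qed

definition gv :: "nat \<Rightarrow> nat \<Rightarrow> nat" where
  "gv r k = (if k = 0 \<or> n < k \<or> k < r then 0 else if k = r then (if r = 1 then q - 1 else 1) else q - 1)"

definition av :: "nat \<Rightarrow> nat" where "av r = nval q (map (gv r) (zimin n))"

definition ev :: "nat \<Rightarrow> nat \<Rightarrow> nat" where "ev r k = gv r k - gv (Suc r) k"

lemma gv_lt: "gv r k < q"
  using q2 unfolding gv_def by auto

lemma gv_rr: "1 \<le> r \<Longrightarrow> r \<le> n \<Longrightarrow> 1 \<le> gv r r \<and> gv r r \<le> q - 1"
  using q2 unfolding gv_def by auto

lemma ev_val: "1 \<le> r \<Longrightarrow> r \<le> n \<Longrightarrow>
   ev r k = (if k = r then gv r r else if k = Suc r \<and> Suc r \<le> n then q - 2 else 0)"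
  unfolding ev_def gv_def by auto

lemma ev_le: "1 \<le> r \<Longrightarrow> r \<le> n \<Longrightarrow> gv (Suc r) k \<le> gv r k"
  using q2 unfolding gv_def by auto

lemma ev_lt: "1 \<le> r \<Longrightarrow> r \<le> n \<Longrightarrow> ev r k < q"
  using gv_lt[of r k] unfolding ev_def by simp

lemma av_split: "1 \<le> r \<Longrightarrow> r \<le> n \<Longrightarrow> av r = nval q (map (ev r) (zimin n)) + av (Suc r)"
  unfolding av_def ev_def using nval_minus[of "zimin n" "gv (Suc r)" "gv r" q] ev_le by simp

end


context zs begin

lemma gv_all: "\<forall>k. gv r k < q" using gv_lt by blast

lemma gv_zero_below: "\<forall>j. 1 \<le> j \<longrightarrow> j < r \<longrightarrow> gv r j = 0"
  by (simp add: gv_def)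

lemma gv_Suc_self: "1 \<le> r \<Longrightarrow> Suc r \<le> n \<Longrightarrow> gv (Suc r) (Suc r) = 1"
  by (simp add: gv_def)

lemma ev_r: "1 \<le> r \<Longrightarrow> r \<le> n \<Longrightarrow> ev r r = gv r r"
  using ev_val[of r r] by simp

lemma ev_Sr: "1 \<le> r \<Longrightarrow> Suc r \<le> n \<Longrightarrow> ev r (Suc r) = q - 2"
  using ev_val[of r "Suc r"] by simp

lemma ev_other: "1 \<le> r \<Longrightarrow> r \<le> n \<Longrightarrow> k \<noteq> r \<Longrightarrow> \<not> (k = Suc r \<and> Suc r \<le> n) \<Longrightarrow> ev r k = 0"
  using ev_val[of r k] by (metis)

lemma Fwd:
  assumes r: "1 \<le> r" "r \<le> n" and g: "Good i" and i: "i \<le> av (Suc r)"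
  shows "Good (i + nval q (map (ev r) (zimin n)))"
proof -
  obtain f where f: "\<forall>k. f k < q" "nval q (map f (zimin n)) = i" using g unfolding Good_def by blast
  have le: "nval q (map f (zimin n)) \<le> nval q (map (gv (Suc r)) (zimin n))"
    using f i unfolding av_def by simp
  have gz: "\<forall>j. 1 \<le> j \<longrightarrow> j \<le> r \<longrightarrow> gv (Suc r) j = 0"
    using gv_zero_below[of "Suc r"] by simp
  have z: "\<And>j. 1 \<le> j \<Longrightarrow> j \<le> r \<Longrightarrow> f j = 0"
    using zeros[OF f(1) gv_all r(2) gz le] by blast
  have s: "Suc r \<le> n \<Longrightarrow> f (Suc r) \<le> 1"
  proof -
    assume sr: "Suc r \<le> n"
    have ag: "\<forall>j. 1 \<le> j \<longrightarrow> j < Suc r \<longrightarrow> f j = gv (Suc r) j"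
      using z gz by (simp add: less_Suc_eq_le)
    have "f (Suc r) \<le> gv (Suc r) (Suc r)"
      using LEXle[OF f(1) gv_all _ sr ag le] by simp
    then show ?thesis using gv_Suc_self[OF r(1) sr] by simp
  qed
  define f' where "f' k = f k + ev r k" for k
  have "\<forall>k. f' k < q"
  proof
    fix k
    show "f' k < q"
    proof (cases "k = r")
      case True
      then have "f' k = gv r r" unfolding f'_def using z[of r] r ev_r[OF r] by simp
      then show ?thesis using gv_lt[of r r] by simp
    next
      case False
      show ?thesis
      proof (cases "k = Suc r \<and> Suc r \<le> n")
        case True
        then have "f' k = f (Suc r) + (q - 2)" unfolding f'_def using ev_Sr[OF r(1)] by simp
        then show ?thesis using s True q2 by simp
      next
        case False2: False
        then have "f' k = f k" unfolding f'_def using ev_other[OF r False] by simp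
        then show ?thesis using f(1) by simp
      qed
    qed
  qed
  moreover have "nval q (map f' (zimin n)) = i + nval q (map (ev r) (zimin n))"
    unfolding f'_def using nval_lin[of q f "ev r" "zimin n"] f(2) by simp
  ultimately show ?thesis unfolding Good_def by blast
qed

lemma Bwd:
  assumes r: "1 \<le> r" "r \<le> n" and g: "Good (i + nval q (map (ev r) (zimin n)))" and i: "i \<le> av (Suc r)"
  shows "Good i"
proof -
  let ?d = "nval q (map (ev r) (zimin n))"
  obtain h where h: "\<forall>k. h k < q" "nval q (map h (zimin n)) = i + ?d" using g unfolding Good_def by blast
  have le: "nval q (map h (zimin n)) \<le> nval q (map (gv r) (zimin n))"
    using h(2) i av_split[OF r] unfolding av_def by simp
  have gz: "\<forall>j. 1 \<le> j \<longrightarrow> j \<le> r - 1 \<longrightarrow> gv r j = 0"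
    using gv_zero_below[of r] by auto
  have rn: "r - 1 \<le> n" using r by simp
  have z: "\<And>j. 1 \<le> j \<Longrightarrow> j \<le> r - 1 \<Longrightarrow> h j = 0"
    using zeros[OF h(1) gv_all rn gz le] by blast
  have ag: "\<forall>j. 1 \<le> j \<longrightarrow> j < r \<longrightarrow> h j = gv r j"
    using z gz by auto
  have hr1: "h r \<le> gv r r"
    using LEXle[OF h(1) gv_all r ag le] .
  have evall: "\<forall>k. ev r k < q" using ev_lt[OF r] by blast
  have hr2: "gv r r \<le> h r"
  proof (rule ccontr)
    assume a: "\<not> gv r r \<le> h r"
    have ag2: "\<forall>j. 1 \<le> j \<longrightarrow> j < r \<longrightarrow> h j = ev r j"
      using z ev_other[OF r] by auto
    have "h r < ev r r" using a ev_r[OF r] by simp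
    then have "nval q (map h (zimin n)) < ?d"
      using LEX[OF h(1) evall r ag2] by blast
    then show False using h(2) by simp
  qed
  have hs: "Suc r \<le> n \<Longrightarrow> q - 2 \<le> h (Suc r)"
  proof (rule ccontr)
    assume a: "Suc r \<le> n" "\<not> q - 2 \<le> h (Suc r)"
    have ag3: "\<forall>j. 1 \<le> j \<longrightarrow> j < Suc r \<longrightarrow> h j = ev r j"
    proof (intro allI impI)
      fix j assume j: "1 \<le> j" "j < Suc r"
      show "h j = ev r j"
      proof (cases "j = r")
        case True then show ?thesis using hr1 hr2 ev_r[OF r] by simp
      next
        case False then show ?thesis using z[of j] j ev_other[OF r False] by simp
      qed
    qed
    have "h (Suc r) < ev r (Suc r)" using a ev_Sr[OF r(1) a(1)] by simp
    then have "nval q (map h (zimin n)) < ?d"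
      using LEX[OF h(1) evall _ a(1) ag3] by simp
    then show False using h(2) by simp
  qed
  have ele: "\<forall>k. ev r k \<le> h k"
  proof
    fix k show "ev r k \<le> h k"
    proof (cases "k = r")
      case True then show ?thesis using hr2 ev_r[OF r] by simp
    next
      case False
      show ?thesis
      proof (cases "k = Suc r \<and> Suc r \<le> n")
        case True then show ?thesis using hs ev_Sr[OF r(1)] by auto
      next
        case False2: False then show ?thesis using ev_other[OF r False False2] by simp
      qed
    qed
  qed
  define h' where "h' k = h k - ev r k" for k
  have "\<forall>k. h' k < q" using h(1) unfolding h'_def by (simp add: less_imp_diff_less)
  moreover have "nval q (map h' (zimin n)) = i"
    using nval_minus[of "zimin n" "ev r" h q] ele h(2) unfolding h'_def by simp
  ultimately show ?thesis unfolding Good_def by blast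
qed

lemma Gap:
  assumes r: "1 \<le> r" "r \<le> n"
  shows "av (Suc r) + 2 \<le> nval q (map (ev r) (zimin n))"
proof (cases "r = n")
  case True
  have g0: "\<forall>k. gv (Suc n) k = 0" by (auto simp: gv_def)
  have a0: "av (Suc r) = 0" unfolding av_def True using g0 by (intro nval_zero) simp
  have evn: "\<And>k. ev n k = (if k = n then 1 else 0)"
  proof -
    fix k
    have "gv n n = 1" using n1 by (simp add: gv_def)
    then show "ev n k = (if k = n then 1 else 0)" using ev_val[of n k] n1 by (simp)
  qed
  have zn: "zimin n = zimin (n - 1) @ [n] @ zimin (n - 1)"
    using zimin_Suc[of "n - 1"] n1 by simp
  define B where "B = map (ev n) (zimin (n - 1))"
  have "map (ev n) (zimin n) = B @ 1 # B" unfolding B_def using evn by (subst zn) simp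
  then have v: "nval q (map (ev n) (zimin n)) = nval q B * q ^ Suc (length B) + (q ^ length B + nval q B)"
    by (simp add: nval_append)
  have "(2::nat) ^ 1 \<le> 2 ^ (n - 1)" using n1 by (intro power_increasing) auto
  then have lB: "length B \<ge> 1" unfolding B_def by (simp add: zimin_length)
  have "q ^ 1 \<le> q ^ length B" using lB q2 by (intro power_increasing) auto
  then have "2 \<le> q ^ length B" using q2 by simp
  then show ?thesis using v a0 True by simp
next
  case False
  then have sr: "Suc r \<le> n" using r by simp
  obtain rest0 where z0: "zimin n = zimin (Suc r) @ rest0" using zimin_prefix[OF sr] by blast
  have zr: "zimin r = zimin (r - 1) @ [r] @ zimin (r - 1)" using zimin_Suc[of "r - 1"] r by simp
  define s where "s = zimin (r - 1) @ Suc r # zimin r @ rest0"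
  have zs: "zimin n = zimin (r - 1) @ r # s"
    unfolding z0 s_def by (simp add: zimin_Suc, subst zr, simp)
  have pa: "map (gv (Suc r)) (zimin (r - 1)) = map (ev r) (zimin (r - 1))"
  proof (intro map_cong refl)
    fix k assume "k \<in> set (zimin (r - 1))"
    then have k: "1 \<le> k" "k < r" using r by (auto simp: zimin_set)
    then have "k \<noteq> r" "k \<noteq> Suc r" by auto
    then show "gv (Suc r) k = ev r k" using ev_other[OF r] k by (simp add: gv_def)
  qed
  have a0: "gv (Suc r) r = 0" by (simp add: gv_def)
  have b1: "0 < ev r r" using ev_r[OF r] gv_rr[OF r] by simp
  have s1: "set (map (gv (Suc r)) s) \<subseteq> {..<q}" using gv_lt by auto
  have W: "nval q (map (ev r) (zimin (r - 1)) @ 0 # map (gv (Suc r)) s) + 1 + nval q (map (ev r) s)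
      \<le> nval q (map (ev r) (zimin (r - 1)) @ ev r r # map (ev r) s)"
    using WQ[OF _ s1 b1] by simp
  have "r \<in> set s" unfolding s_def using r by (simp add: zimin_set)
  then have "ev r r \<in> set (map (ev r) s)" by simp
  then have p1: "nval q (map (ev r) s) \<ge> 1" using nval_pos b1 q2 by simp
  have "av (Suc r) = nval q (map (ev r) (zimin (r - 1)) @ 0 # map (gv (Suc r)) s)"
    unfolding av_def zs map_append list.map pa a0 ..
  moreover have "nval q (map (ev r) (zimin n)) = nval q (map (ev r) (zimin (r - 1)) @ ev r r # map (ev r) s)"
    unfolding zs by simp
  ultimately show ?thesis using W p1 by linarith
qed

lemma level:
  assumes r: "1 \<le> r" "r \<le> n"
    and ih: "is_instance (zimin k) (take (Suc (av (Suc r))) TT)"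
  shows "is_instance (zimin (Suc k)) (take (Suc (av r)) TT)"
proof -
  define d where "d = nval q (map (ev r) (zimin n))"
  define a where "a = av (Suc r)"
  have sp: "av r = a + d" using av_split[OF r] unfolding a_def d_def by simp
  have gap: "a + 2 \<le> d" using Gap[OF r] unfolding a_def d_def .
  have bnd: "av r < q ^ mm"
  proof -
    have "set (map (gv r) (zimin n)) \<subseteq> {..<q}" using gv_lt by auto
    then have "nval q (map (gv r) (zimin n)) < q ^ length (map (gv r) (zimin n))" by (rule nval_bound)
    then show ?thesis unfolding av_def mm_def by (simp add: zimin_length)
  qed
  have lt: "a + d < length TT" using bnd sp TT_len by simp
  have eq: "\<forall>i\<le>a. TT ! i = TT ! (i + d)"
  proof (intro allI impI)
    fix i assume i: "i \<le> a"
    have i1: "i < q ^ mm" "i + d < q ^ mm" using i lt TT_len by auto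
    have "Good i \<longleftrightarrow> Good (i + d)"
      using Fwd[OF r _ i[unfolded a_def]] Bwd[OF r _ i[unfolded a_def]] unfolding d_def by blast
    then show "TT ! i = TT ! (i + d)" using TT_nth i1 by simp
  qed
  define y where "y = drop (Suc a) (take d TT)"
  have "take (Suc (a + d)) TT = take (Suc a) TT @ y @ take (Suc a) TT"
    unfolding y_def using border[OF gap lt eq] .
  moreover have "y \<noteq> []" unfolding y_def using gap lt by simp
  ultimately show ?thesis using inst_step[OF ih[folded a_def]] sp by simp
qed

lemma main: "j \<le> n \<Longrightarrow> is_instance (zimin (Suc j)) (take (Suc (av (n + 1 - j))) TT)"
proof (induction j)
  case 0
  have g0: "\<forall>k. gv (Suc n) k = 0" by (auto simp: gv_def)
  have a0: "av (n + 1) = 0" unfolding av_def using g0 by (intro nval_zero) simp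
  have "TT \<noteq> []" using TT_len q2 by (metis le_zero_eq list.size(3) not_numeral_le_zero power_eq_0_iff)
  then obtain x xs where "TT = x # xs" by (cases TT) auto
  then have "take (Suc (av (n + 1 - 0))) TT = [x]" using a0 by simp
  then show ?case unfolding is_instance_def by (rule_tac x="\<lambda>_. [x]" in exI) simp
next
  case (Suc j)
  define r where "r = n - j"
  have r: "1 \<le> r" "r \<le> n" using Suc.prems unfolding r_def by auto
  have e1: "n + 1 - j = Suc r" "n + 1 - Suc j = r" using Suc.prems unfolding r_def by auto
  have "is_instance (zimin (Suc j)) (take (Suc (av (Suc r))) TT)" using Suc e1 by simp
  then have "is_instance (zimin (Suc (Suc j))) (take (Suc (av r)) TT)" by (rule level[OF r])
  then show ?case using e1 by simp
qed

lemma av1: "av 1 = q ^ mm - 1"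
proof -
  have "map (gv 1) (zimin n) = map (\<lambda>_. q - 1) (zimin n)"
    by (intro map_cong refl) (auto simp: gv_def zimin_set)
  then have "map (gv 1) (zimin n) = replicate mm (q - 1)"
    by (simp add: map_replicate_const zimin_length mm_def)
  then show ?thesis unfolding av_def using nval_replicate q2 by simp
qed

lemma final: "is_instance (zimin (n + 1)) TT"
proof -
  have "is_instance (zimin (Suc n)) (take (Suc (av 1)) TT)" using main[of n] by simp
  moreover have "Suc (av 1) = length TT" using av1 TT_len q2 by simp
  ultimately show ?thesis by simp
qed

end

theorem theorem2:
  fixes q n m :: nat
  assumes "q \<ge> 2" and "n > 1" and "m = 2 ^ n - 1"
  shows "set (truth_table n q m) \<subseteq> {0, 1} \<and> is_instance (zimin (n + 1)) (truth_table n q m)"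
proof
  show "set (truth_table n q m) \<subseteq> {0, 1}" unfolding truth_table_def by auto
  interpret zs q n using assms(1,2) by unfold_locales
  show "is_instance (zimin (n + 1)) (truth_table n q m)"
    using final unfolding TT_def mm_def assms(3) .
qed


end
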